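(* Let $C\subseteq(\mathbb{N}\cup\{\infty\})^d$ be semi-linear and $D\subseteq\{1,\dots,d\}$. Let $C_D\subseteq\mathbb{N}^d$ be the set obtained from $C$ by (1) removing every vector $(v_1,\dots,v_d)$ with $v_i=\infty$ for some $i\notin D$, and then (2) as long as the set contains a vector $(v_1,\dots,v_d)$ with $v_i=\infty$ for some $i$, replacing it by all vectors $(v_1,\dots,v_{i-1},z,v_{i+1},\dots,v_d)$ with $z\in\mathbb{N}$. (Equivalently, $C_D$ is the set of $\mathbf{u}\in\mathbb{N}^d$ for which there is $\mathbf{v}\in C$ with $v_i=\infty$ only for $i\in D$ and $u_i=v_i$ whenever $v_i\neq\infty$.) Then $C_D$ is semi-linear.
   Context: A linear set over $(\mathbb{N}\cup\{\infty\})^d$ is a set $\{b_0+b_1z_1+\dots+b_\ell z_\ell\mid z_1,\dots,z_\ell\in\mathbb{N}\}$ with $b_0,\dots,b_\ell\in(\mathbb{N}\cup\{\infty\})^d$, with componentwise arithmetic where $z+\infty=\infty+z=\infty+\infty=\infty$, $z\cdot\infty=\infty\cdot z=\infty$ for $z>0$, and $0\cdot\infty=\infty\cdot0=0$. A semi-linear set is a finite union of linear sets; for subsets of $\mathbb{N}^d$ this means all $b_j\in\mathbb{N}^d$. *)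

theory Defs
  imports Main "HOL-Library.Extended_Nat"
begin

(* Vectors in (N \<union> {\<infinity>})^d are functions nat \<Rightarrow> enat, components 0..d-1,
   and identically 0 at indices \<ge> d.  enat arithmetic matches the paper:
   x + \<infinity> = \<infinity>, 0 * \<infinity> = 0, n * \<infinity> = \<infinity> for n > 0. *)

definition linear_set_enat :: "nat \<Rightarrow> (nat \<Rightarrow> enat) set \<Rightarrow> bool" where
  "linear_set_enat d S \<longleftrightarrow>
     (\<exists>b0 bs. (\<forall>i\<ge>d. b0 i = 0) \<and> (\<forall>b\<in>set bs. \<forall>i\<ge>d. b i = 0) \<and>
        S = {(\<lambda>i. b0 i + (\<Sum>j<length bs. of_nat (z j) * (bs ! j) i)) | z :: nat \<Rightarrow> nat. True})"

definition semilinear_enat :: "nat \<Rightarrow> (nat \<Rightarrow> enat) set \<Rightarrow> bool" where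
  "semilinear_enat d S \<longleftrightarrow>
     (\<exists>Ls. finite Ls \<and> (\<forall>L\<in>Ls. linear_set_enat d L) \<and> S = \<Union>Ls)"

definition linear_set_nat :: "nat \<Rightarrow> (nat \<Rightarrow> nat) set \<Rightarrow> bool" where
  "linear_set_nat d S \<longleftrightarrow>
     (\<exists>b0 bs. (\<forall>i\<ge>d. b0 i = 0) \<and> (\<forall>b\<in>set bs. \<forall>i\<ge>d. b i = 0) \<and>
        S = {(\<lambda>i. b0 i + (\<Sum>j<length bs. z j * (bs ! j) i)) | z :: nat \<Rightarrow> nat. True})"

definition semilinear_nat :: "nat \<Rightarrow> (nat \<Rightarrow> nat) set \<Rightarrow> bool" where
  "semilinear_nat d S \<longleftrightarrow>
     (\<exists>Ls. finite Ls \<and> (\<forall>L\<in>Ls. linear_set_nat d L) \<and> S = \<Union>Ls)"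

definition restrict_inf :: "nat \<Rightarrow> (nat \<Rightarrow> enat) set \<Rightarrow> nat set \<Rightarrow> (nat \<Rightarrow> nat) set" where
  "restrict_inf d C D = {u. (\<forall>i\<ge>d. u i = 0) \<and>
     (\<exists>v\<in>C. (\<forall>i. v i = \<infinity> \<longrightarrow> i \<in> D) \<and> (\<forall>i. v i \<noteq> \<infinity> \<longrightarrow> v i = enat (u i)))}"

end

theory Submission imports Defs begin

lemma sum_enat_inf: "finite A \<Longrightarrow> (sum f A = (\<infinity>::enat)) \<longleftrightarrow> (\<exists>a\<in>A. f a = \<infinity>)"
  by (induction A rule: finite_induct) (auto simp: plus_eq_infty_iff_enat)

lemma sum_enat_fin: "finite A \<Longrightarrow> (\<forall>a\<in>A. f a \<noteq> \<infinity>) \<Longrightarrow> sum f A = enat (\<Sum>a\<in>A. the_enat (f a))"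
  by (induction A rule: finite_induct) (auto simp: zero_enat_def)

lemma linA:
  fixes J :: "'a set" and g :: "'a \<Rightarrow> nat \<Rightarrow> nat"
  assumes "finite J" "\<forall>i\<ge>d. b0 i = 0" "\<forall>j\<in>J. \<forall>i\<ge>d. g j i = 0"
  shows "linear_set_nat d {(\<lambda>i. b0 i + (\<Sum>j\<in>J. z j * g j i)) | z. True}"
proof -
  obtain xs where xs: "set xs = J" "distinct xs" using finite_distinct_list[OF assms(1)] by blast
  have bij: "bij_betw ((!) xs) {..<length xs} J" using bij_betw_nth xs by blast
  have key: "(\<Sum>k<length xs. z (xs!k) * g (xs!k) i) = (\<Sum>j\<in>J. z j * g j i)" for z i
    using sum.reindex_bij_betw[OF bij, of "\<lambda>j. z j * g j i"] by simp
  define h where "h = inv_into {..<length xs} ((!) xs)"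
  have h: "h (xs!k) = k" if "k < length xs" for k
    unfolding h_def using bij that by (simp add: bij_betw_def inv_into_f_f)
  show ?thesis unfolding linear_set_nat_def
  proof (intro exI conjI)
    show "\<forall>i\<ge>d. b0 i = 0" using assms by auto
    show "\<forall>b\<in>set (map g xs). \<forall>i\<ge>d. b i = 0" using assms xs by auto
    show "{(\<lambda>i. b0 i + (\<Sum>j\<in>J. z j * g j i)) | z. True} =
      {(\<lambda>i. b0 i + (\<Sum>j<length (map g xs). z j * (map g xs ! j) i)) | z. True}"
    proof (intro equalityI subsetI)
      fix x assume "x \<in> {(\<lambda>i. b0 i + (\<Sum>j\<in>J. z j * g j i)) | z. True}"
      then obtain z where x: "x = (\<lambda>i. b0 i + (\<Sum>j\<in>J. z j * g j i))" by blast
      have "x = (\<lambda>i. b0 i + (\<Sum>j<length (map g xs). (\<lambda>k. z (xs!k)) j * (map g xs ! j) i))"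
        unfolding x using key by simp
      then show "x \<in> {(\<lambda>i. b0 i + (\<Sum>j<length (map g xs). z j * (map g xs ! j) i)) | z. True}"
        by (intro CollectI exI[of _ "\<lambda>k. z (xs!k)"]) simp
    next
      fix x assume "x \<in> {(\<lambda>i. b0 i + (\<Sum>j<length (map g xs). z j * (map g xs ! j) i)) | z. True}"
      then obtain z where x: "x = (\<lambda>i. b0 i + (\<Sum>j<length (map g xs). z j * (map g xs ! j) i))" by blast
      have "(\<Sum>j<length (map g xs). z j * (map g xs ! j) i) = (\<Sum>k<length xs. (z \<circ> h) (xs!k) * g (xs!k) i)" for i
        by (rule sum.cong) (auto simp: h)
      then have "x = (\<lambda>i. b0 i + (\<Sum>j\<in>J. (z \<circ> h) j * g j i))"
        unfolding x using key by presburger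
      then show "x \<in> {(\<lambda>i. b0 i + (\<Sum>j\<in>J. z j * g j i)) | z. True}" by blast
    qed
  qed
qed

lemma semi_union:
  assumes "finite A" "\<forall>a\<in>A. semilinear_nat d (f a)"
  shows "semilinear_nat d (\<Union>a\<in>A. f a)"
proof -
  from assms(2) obtain F where F: "\<forall>a\<in>A. finite (F a) \<and> (\<forall>L\<in>F a. linear_set_nat d L) \<and> f a = \<Union>(F a)"
    unfolding semilinear_nat_def by metis
  show ?thesis unfolding semilinear_nat_def
    by (rule exI[of _ "\<Union>(F ` A)"]) (use F assms(1) in auto)
qed


lemma enat_mult_inf: "(of_nat k * (x::enat) = \<infinity>) \<longleftrightarrow> (k > 0 \<and> x = \<infinity>)"
  by (cases x) (auto simp: of_nat_eq_enat)

lemma lin_case: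
  assumes lin: "linear_set_enat d L" and D: "D \<subseteq> {..<d}"
  shows "semilinear_nat d (restrict_inf d L D)"
proof -
  obtain b0 bs where b0: "\<forall>i\<ge>d. b0 i = 0" and bs: "\<forall>b\<in>set bs. \<forall>i\<ge>d. b i = 0"
    and L: "L = {(\<lambda>i. b0 i + (\<Sum>j<length bs. of_nat (z j) * (bs ! j) i)) | z :: nat \<Rightarrow> nat. True}"
    using lin unfolding linear_set_enat_def by blast
  define n where "n = length bs"
  define IP where "IP P = {i. b0 i = \<infinity> \<or> (\<exists>j\<in>P. (bs!j) i = \<infinity>)}" for P
  define c0 where "c0 P i = (if i \<in> IP P then 0 else the_enat (b0 i) + (\<Sum>j\<in>P. the_enat ((bs!j) i)))" for P i
  define g where "g P k i = (case k of Inl j \<Rightarrow> (if i \<in> IP P then 0 else the_enat ((bs!j) i))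
                                 | Inr k' \<Rightarrow> (if i = k' then 1 else 0))" for P k i
  define S where "S P = {(\<lambda>i. c0 P i + (\<Sum>k\<in>P <+> IP P. z k * g P k i)) | z. True}" for P
  have bsz: "(bs!j) i = 0" if "j < n" "i \<ge> d" for i j using bs that n_def by auto
  have IPd: "IP P \<subseteq> {..<d}" if "P \<subseteq> {..<n}" for P
  proof
    fix i assume i: "i \<in> IP P"
    show "i \<in> {..<d}"
    proof (rule ccontr)
      assume "i \<notin> {..<d}" then have "d \<le> i" by simp
      then show False using i that b0 bsz unfolding IP_def by auto
    qed
  qed
  have finIP: "finite (IP P)" if "P \<subseteq> {..<n}" for P using IPd[OF that] finite_subset by blast
  have finP: "finite P" if "P \<subseteq> {..<n}" for P :: "nat set" using that finite_subset by blast
  have va: "(b0 i + (\<Sum>j<n. of_nat (z j) * (bs ! j) i) = \<infinity>) \<longleftrightarrow> i \<in> IP P"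
    if P: "P \<subseteq> {..<n}" and z0: "\<forall>j<n. j \<notin> P \<longrightarrow> z j = 0" and zp: "\<forall>j\<in>P. z j > 0" for P z i
  proof -
    have "(\<Sum>j<n. of_nat (z j) * (bs ! j) i) = \<infinity> \<longleftrightarrow> (\<exists>j<n. of_nat (z j) * (bs ! j) i = \<infinity>)"
      using sum_enat_inf[of "{..<n}"] by auto
    also have "\<dots> \<longleftrightarrow> (\<exists>j\<in>P. (bs!j) i = \<infinity>)"
      using P z0 zp by (auto simp: enat_mult_inf)
    finally show ?thesis unfolding IP_def by (auto simp: plus_eq_infty_iff_enat)
  qed
  have vb: "b0 i + (\<Sum>j<n. of_nat (z j) * (bs ! j) i) = enat (the_enat (b0 i) + (\<Sum>j\<in>P. z j * the_enat ((bs!j) i)))"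
    if P: "P \<subseteq> {..<n}" and z0: "\<forall>j<n. j \<notin> P \<longrightarrow> z j = 0" and i: "i \<notin> IP P" for P z i
  proof -
    have fin0: "b0 i \<noteq> \<infinity>" and finj: "\<forall>j\<in>P. (bs!j) i \<noteq> \<infinity>" using i unfolding IP_def by auto
    have "(\<Sum>j<n. of_nat (z j) * (bs ! j) i) = (\<Sum>j\<in>P. of_nat (z j) * (bs ! j) i)"
      using P z0 by (intro sum.mono_neutral_right) auto
    also have "\<dots> = (\<Sum>j\<in>P. enat (z j * the_enat ((bs!j) i)))"
      using finj by (intro sum.cong) (auto simp: of_nat_eq_enat)
    also have "\<dots> = enat (\<Sum>j\<in>P. z j * the_enat ((bs!j) i))"
      using sum_enat_fin[OF finP[OF P], of "\<lambda>j. enat (z j * the_enat ((bs!j) i))"] by simp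
    finally show ?thesis using fin0 by auto
  qed
  have wc: "c0 P i + (\<Sum>k\<in>P <+> IP P. z k * g P k i) =
      (if i \<in> IP P then z (Inr i) else the_enat (b0 i) + (\<Sum>j\<in>P. (z (Inl j) + 1) * the_enat ((bs!j) i)))"
    if P: "P \<subseteq> {..<n}" for P z i
  proof -
    have "(\<Sum>k\<in>P <+> IP P. z k * g P k i) = (\<Sum>j\<in>P. z (Inl j) * g P (Inl j) i) + (\<Sum>k\<in>IP P. z (Inr k) * g P (Inr k) i)"
      using sum.Plus[OF finP[OF P] finIP[OF P]] by simp
    also have "(\<Sum>k\<in>IP P. z (Inr k) * g P (Inr k) i) = (if i \<in> IP P then z (Inr i) else 0)"
      unfolding g_def using finIP[OF P] by (simp add: sum.delta' if_distrib[of "\<lambda>x. _ * x"] cong: if_cong)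
    finally show ?thesis
      by (auto simp: c0_def g_def sum.distrib algebra_simps)
  qed
  have eq: "restrict_inf d L D = (\<Union>P\<in>{P. P \<subseteq> {..<n} \<and> IP P \<subseteq> D}. S P)"
  proof (intro equalityI subsetI)
    fix u assume "u \<in> restrict_inf d L D"
    then obtain v where ud: "\<forall>i\<ge>d. u i = 0" and v: "v \<in> L" and vD: "\<forall>i. v i = \<infinity> \<longrightarrow> i \<in> D"
      and vu: "\<forall>i. v i \<noteq> \<infinity> \<longrightarrow> v i = enat (u i)" unfolding restrict_inf_def by blast
    obtain z where vz: "v = (\<lambda>i. b0 i + (\<Sum>j<n. of_nat (z j) * (bs ! j) i))" using v L n_def by blast
    define P where "P = {j. j < n \<and> z j > 0}"
    have P: "P \<subseteq> {..<n}" and z0: "\<forall>j<n. j \<notin> P \<longrightarrow> z j = 0" and zp: "\<forall>j\<in>P. z j > 0"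
      unfolding P_def by auto
    have IPD: "IP P \<subseteq> D" using va[OF P z0 zp] vD vz by auto
    define z' where "z' = case_sum (\<lambda>j. z j - 1) u"
    have "u = (\<lambda>i. c0 P i + (\<Sum>k\<in>P <+> IP P. z' k * g P k i))"
    proof
      fix i
      show "u i = c0 P i + (\<Sum>k\<in>P <+> IP P. z' k * g P k i)"
      proof (cases "i \<in> IP P")
        case True then show ?thesis unfolding wc[OF P] z'_def by simp
      next
        case False
        have "v i \<noteq> \<infinity>" using va[OF P z0 zp] False vz by auto
        then have "enat (u i) = enat (the_enat (b0 i) + (\<Sum>j\<in>P. z j * the_enat ((bs!j) i)))"
          using vu vb[OF P z0 False] vz by auto
        moreover have "(\<Sum>j\<in>P. z j * the_enat ((bs!j) i)) = (\<Sum>j\<in>P. (z' (Inl j) + 1) * the_enat ((bs!j) i))"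
          using zp unfolding z'_def by (intro sum.cong) auto
        ultimately show ?thesis unfolding wc[OF P] using False by simp
      qed
    qed
    then have "u \<in> S P" unfolding S_def by blast
    then show "u \<in> (\<Union>P\<in>{P. P \<subseteq> {..<n} \<and> IP P \<subseteq> D}. S P)" using P IPD by blast
  next
    fix u assume "u \<in> (\<Union>P\<in>{P. P \<subseteq> {..<n} \<and> IP P \<subseteq> D}. S P)"
    then obtain P z' where P: "P \<subseteq> {..<n}" and IPD: "IP P \<subseteq> D"
      and u: "u = (\<lambda>i. c0 P i + (\<Sum>k\<in>P <+> IP P. z' k * g P k i))" unfolding S_def by blast
    define z where "z j = (if j \<in> P then z' (Inl j) + 1 else 0)" for j
    have z0: "\<forall>j<n. j \<notin> P \<longrightarrow> z j = 0" and zp: "\<forall>j\<in>P. z j > 0" unfolding z_def by auto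
    define v where "v = (\<lambda>i. b0 i + (\<Sum>j<n. of_nat (z j) * (bs ! j) i))"
    have vL: "v \<in> L" unfolding L v_def n_def by blast
    have ui: "u i = (if i \<in> IP P then z' (Inr i) else the_enat (b0 i) + (\<Sum>j\<in>P. z j * the_enat ((bs!j) i)))" for i
      unfolding u wc[OF P] z_def by (auto intro!: sum.cong)
    have "\<forall>i\<ge>d. u i = 0"
    proof (intro allI impI)
      fix i assume i: "d \<le> i"
      then have "i \<notin> IP P" using IPd[OF P] by auto
      then show "u i = 0" unfolding ui using i b0 bsz P by (auto simp: zero_enat_def intro!: sum.neutral)
    qed
    moreover have "\<forall>i. v i = \<infinity> \<longrightarrow> i \<in> D" using va[OF P z0 zp] IPD unfolding v_def by auto
    moreover have "\<forall>i. v i \<noteq> \<infinity> \<longrightarrow> v i = enat (u i)"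
    proof (intro allI impI)
      fix i assume "v i \<noteq> \<infinity>"
      then have "i \<notin> IP P" using va[OF P z0 zp] unfolding v_def by auto
      then show "v i = enat (u i)" unfolding v_def vb[OF P z0 \<open>i \<notin> IP P\<close>] ui by simp
    qed
    ultimately show "u \<in> restrict_inf d L D" unfolding restrict_inf_def using vL by blast
  qed
  have "semilinear_nat d (S P)" if "P \<subseteq> {..<n}" for P
  proof -
    have "linear_set_nat d (S P)" unfolding S_def
    proof (rule linA)
      show "finite (P <+> IP P)" using finP[OF that] finIP[OF that] by simp
      show "\<forall>i\<ge>d. c0 P i = 0" using b0 bsz that IPd[OF that] by (auto simp: c0_def zero_enat_def intro!: sum.neutral)
      show "\<forall>j\<in>P <+> IP P. \<forall>i\<ge>d. g P j i = 0" using IPd[OF that] that bsz by (auto simp: g_def zero_enat_def)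
    qed
    then show ?thesis unfolding semilinear_nat_def by (intro exI[of _ "{S P}"]) auto
  qed
  then show ?thesis unfolding eq by (intro semi_union) auto
qed

theorem lemma6:
  fixes d :: nat and C :: "(nat \<Rightarrow> enat) set" and D :: "nat set"
  assumes "semilinear_enat d C"
    and "D \<subseteq> {..<d}"
  shows "semilinear_nat d (restrict_inf d C D)"
proof -
  obtain Ls where Ls: "finite Ls" "\<forall>L\<in>Ls. linear_set_enat d L" "C = \<Union>Ls"
    using assms(1) unfolding semilinear_enat_def by blast
  have "restrict_inf d C D = (\<Union>L\<in>Ls. restrict_inf d L D)"
    unfolding Ls(3) restrict_inf_def by blast
  then show ?thesis using semi_union[OF Ls(1)] lin_case[OF _ assms(2)] Ls(2) by auto
qed

end
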